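(* Let $X$ be a regular, $\omega_1$-expandable, Baire $\sigma$-space. Then $dis(X)\geq\Delta(X)$.
   Context: All spaces are Hausdorff. $dis(X)$ is the least number of discrete subspaces needed to cover $X$; $\Delta(X)$ is the least cardinality of a non-empty open subset of $X$. A $\sigma$-space is a space having a $\sigma$-discrete network (a network being a family $\mathcal{N}$ of subsets such that for every open $U$ and $x\in U$ there is $N\in\mathcal{N}$ with $x\in N\subseteq U$). For a collection $\mathcal{G}$ of subsets, $ord(x,\mathcal{G})=|\{G\in\mathcal{G}:x\in G\}|$. $X$ is $\omega_1$-expandable if for every closed discrete set $D\subseteq X$ there is a family $\mathcal{G}=\{U_d: d\in D\}$ of open sets with $U_d\cap D=\{d\}$ for each $d\in D$ and $ord(x,\mathcal{G})\leq\omega_1$ for every $x\in X$. *)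

theory Defs
  imports "HOL-Analysis.Analysis"
begin

definition Baire_space :: "'a topology \<Rightarrow> bool" where
  "Baire_space X \<longleftrightarrow>
     (\<forall>G :: nat \<Rightarrow> 'a set.
        (\<forall>n. openin X (G n) \<and> X closure_of (G n) = topspace X)
        \<longrightarrow> X closure_of (\<Inter>n. G n) = topspace X)"

definition discrete_subspace :: "'a topology \<Rightarrow> 'a set \<Rightarrow> bool" where
  "discrete_subspace X D \<longleftrightarrow> D \<subseteq> topspace X \<and>
     (\<forall>d\<in>D. \<exists>U. openin X U \<and> U \<inter> D = {d})"

definition discrete_family :: "'a topology \<Rightarrow> 'a set set \<Rightarrow> bool" where
  "discrete_family X \<A> \<longleftrightarrow>
     (\<forall>x\<in>topspace X. \<exists>V. openin X V \<and> x \<in> V \<and>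
        (\<forall>A\<in>\<A>. \<forall>B\<in>\<A>. A \<inter> V \<noteq> {} \<and> B \<inter> V \<noteq> {} \<longrightarrow> A = B))"

definition network :: "'a topology \<Rightarrow> 'a set set \<Rightarrow> bool" where
  "network X \<N> \<longleftrightarrow> (\<forall>N\<in>\<N>. N \<subseteq> topspace X) \<and>
     (\<forall>U x. openin X U \<and> x \<in> U \<longrightarrow> (\<exists>N\<in>\<N>. x \<in> N \<and> N \<subseteq> U))"

definition sigma_space :: "'a topology \<Rightarrow> bool" where
  "sigma_space X \<longleftrightarrow>
     (\<exists>\<N> :: nat \<Rightarrow> 'a set set. (\<forall>n. discrete_family X (\<N> n)) \<and> network X (\<Union>n. \<N> n))"

text \<open>omega_1-expandable. The cardinal omega_1 is cardSuc natLeq.\<close>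
definition omega1_expandable :: "'a topology \<Rightarrow> bool" where
  "omega1_expandable X \<longleftrightarrow>
     (\<forall>D. closedin X D \<and> discrete_subspace X D \<longrightarrow>
        (\<exists>U :: 'a \<Rightarrow> 'a set. (\<forall>d\<in>D. openin X (U d) \<and> U d \<inter> D = {d}) \<and>
           (\<forall>x\<in>topspace X. ordLeq3 (card_of {G. G \<in> U ` D \<and> x \<in> G}) (cardSuc natLeq))))"

end

theory Submission
  imports Defs
begin

lemma baire_cover:
  fixes C :: "nat \<Rightarrow> 'a set"
  assumes B: "Baire_space X" and ne: "topspace X \<noteq> {}"
    and cov: "topspace X \<subseteq> (\<Union>n. C n)"
  shows "\<exists>n W. openin X W \<and> W \<noteq> {} \<and> W \<subseteq> X closure_of (C n)"
proof (rule ccontr)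
  assume H: "\<not> ?thesis"
  define G where "G n = topspace X - X closure_of (C n)" for n
  have GG: "openin X (G n) \<and> X closure_of (G n) = topspace X" for n
  proof
    show "openin X (G n)" unfolding G_def by (intro openin_diff openin_topspace closedin_closure_of)
    have "X interior_of (X closure_of C n) = {}"
    proof (rule ccontr)
      assume "X interior_of (X closure_of C n) \<noteq> {}"
      moreover have "openin X (X interior_of (X closure_of C n))" by simp
      moreover have "X interior_of (X closure_of C n) \<subseteq> X closure_of C n" by (rule interior_of_subset)
      ultimately show False using H by blast
    qed
    then show "X closure_of (G n) = topspace X"
      unfolding G_def closure_of_complement by (simp only: Diff_empty)
  qed
  have "X closure_of (\<Inter>n. G n) = topspace X"
    using B[unfolded Baire_space_def, rule_format, of G] GG by blast
  then have "(\<Inter>n. G n) \<noteq> {}"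
  proof (intro notI)
    assume cl: "X closure_of (\<Inter>n. G n) = topspace X" and e: "(\<Inter>n. G n) = {}"
    have "topspace X = X closure_of (\<Inter>n. G n)" using cl by (rule sym)
    also have "\<dots> = X closure_of {}" by (simp only: e)
    also have "\<dots> = {}" by (rule closure_of_empty)
    finally show False using ne by (rule notE[rotated])
  qed
  then obtain x where x: "x \<in> (\<Inter>n. G n)" by blast
  then have "x \<in> topspace X" by (simp add: G_def)
  with cov obtain n where "x \<in> C n" by blast
  with \<open>x \<in> topspace X\<close> have "x \<in> topspace X \<inter> C n" by (rule IntI)
  then have "x \<in> X closure_of C n" by (rule subsetD[OF closure_of_subset_Int])
  moreover have "x \<in> G n" using x by blast
  ultimately show False unfolding G_def by blast
qed

lemma local_one_closed_discrete:
  assumes T1: "t1_space X" and sub: "A \<subseteq> topspace X"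
    and loc: "\<forall>x\<in>topspace X. \<exists>V. openin X V \<and> x \<in> V \<and> (\<forall>a\<in>A\<inter>V. \<forall>b\<in>A\<inter>V. a = b)"
  shows "closedin X A \<and> discrete_subspace X A"
proof
  have "openin X (topspace X - A)"
  proof (subst openin_subopen, intro ballI)
    fix x assume x: "x \<in> topspace X - A"
    then obtain V where V: "openin X V" "x \<in> V" "\<forall>a\<in>A\<inter>V. \<forall>b\<in>A\<inter>V. a = b"
      using loc by blast
    have VX: "V \<subseteq> topspace X" using V(1) by (rule openin_subset)
    show "\<exists>T. openin X T \<and> x \<in> T \<and> T \<subseteq> topspace X - A"
    proof (cases "A \<inter> V = {}")
      case True
      then have "V \<subseteq> topspace X - A" using VX by blast
      then show ?thesis using V(1,2) by blast
    next
      case False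
      then obtain e where e: "e \<in> A \<inter> V" by blast
      then have AV: "A \<inter> V = {e}" using V(3) by blast
      have eX: "e \<in> topspace X" using e sub by blast
      have "closedin X {e}" using T1 eX unfolding t1_space_closedin_singleton by blast
      then have "openin X (V - {e})" using V(1) by (intro openin_diff)
      moreover have "x \<in> V - {e}" using x V(2) e by blast
      moreover have "V - {e} \<subseteq> topspace X - A" using AV VX by blast
      ultimately show ?thesis by blast
    qed
  qed
  then show "closedin X A" using sub unfolding closedin_def by blast
  show "discrete_subspace X A"
    unfolding discrete_subspace_def
  proof (intro conjI ballI sub)
    fix d assume d: "d \<in> A"
    then have "d \<in> topspace X" using sub by blast
    then obtain V where V: "openin X V" "d \<in> V" "\<forall>a\<in>A\<inter>V. \<forall>b\<in>A\<inter>V. a = b"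
      using loc by blast
    then have "V \<inter> A = {d}" using d by blast
    with V(1) show "\<exists>U. openin X U \<and> U \<inter> A = {d}" by blast
  qed
qed

lemma split_discrete:
  fixes \<N> :: "nat \<Rightarrow> 'a set set"
  assumes T1: "t1_space X"
    and fam: "\<And>n. discrete_family X (\<N> n)" and net: "network X (\<Union>n. \<N> n)"
    and D: "discrete_subspace X D"
  shows "\<exists>E :: nat \<Rightarrow> 'a set. (\<Union>n. E n) = D \<and> (\<forall>n. closedin X (E n) \<and> discrete_subspace X (E n))"
proof -
  have "\<forall>d\<in>D. \<exists>W. openin X W \<and> W \<inter> D = {d}" using D unfolding discrete_subspace_def by blast
  then obtain W where W0: "\<forall>d\<in>D. openin X (W d) \<and> W d \<inter> D = {d}"
    using bchoice[of D "\<lambda>d W. openin X W \<and> W \<inter> D = {d}"] by blast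
  have W: "openin X (W d) \<and> W d \<inter> D = {d}" if "d \<in> D" for d using W0 that by blast
  have "\<forall>d\<in>D. \<exists>m N. N \<in> \<N> m \<and> d \<in> N \<and> N \<subseteq> W d"
  proof
    fix d assume d: "d \<in> D"
    then have "openin X (W d) \<and> d \<in> W d" using W by blast
    then obtain N where "N \<in> (\<Union>n. \<N> n)" "d \<in> N" "N \<subseteq> W d"
      using net unfolding network_def by blast
    then show "\<exists>m N. N \<in> \<N> m \<and> d \<in> N \<and> N \<subseteq> W d" by blast
  qed
  then have "\<forall>d\<in>D. \<exists>p. snd p \<in> \<N> (fst p) \<and> d \<in> snd p \<and> snd p \<subseteq> W d" by simp
  then obtain P where P0: "\<forall>d\<in>D. snd (P d) \<in> \<N> (fst (P d)) \<and> d \<in> snd (P d) \<and> snd (P d) \<subseteq> W d"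
    using bchoice[of D "\<lambda>d p. snd p \<in> \<N> (fst p) \<and> d \<in> snd p \<and> snd p \<subseteq> W d"] by blast
  define m where "m d = fst (P d)" for d
  define N where "N d = snd (P d)" for d
  have MN: "N d \<in> \<N> (m d) \<and> d \<in> N d \<and> N d \<subseteq> W d" if "d \<in> D" for d
    using P0 that unfolding m_def N_def by blast
  define E where "E n = {d\<in>D. m d = n}" for n
  have DX: "D \<subseteq> topspace X" using D unfolding discrete_subspace_def by (rule conjunct1)
  have C: "closedin X (E n) \<and> discrete_subspace X (E n)" for n
  proof (rule local_one_closed_discrete[OF T1])
    show "E n \<subseteq> topspace X" using DX unfolding E_def by auto
    show "\<forall>x\<in>topspace X. \<exists>V. openin X V \<and> x \<in> V \<and> (\<forall>a\<in>E n \<inter> V. \<forall>b\<in>E n \<inter> V. a = b)"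
    proof
      fix x assume x: "x \<in> topspace X"
      have "discrete_family X (\<N> n)" by (rule fam)
      then have "\<exists>V. openin X V \<and> x \<in> V \<and>
        (\<forall>A\<in>\<N> n. \<forall>B\<in>\<N> n. A \<inter> V \<noteq> {} \<and> B \<inter> V \<noteq> {} \<longrightarrow> A = B)"
        using x unfolding discrete_family_def by (rule bspec)
      then obtain V where V: "openin X V" "x \<in> V"
        "\<forall>A\<in>\<N> n. \<forall>B\<in>\<N> n. A \<inter> V \<noteq> {} \<and> B \<inter> V \<noteq> {} \<longrightarrow> A = B"
        by (elim exE conjE)
      have "\<forall>a\<in>E n \<inter> V. \<forall>b\<in>E n \<inter> V. a = b"
      proof (intro ballI)
        fix a b assume a: "a \<in> E n \<inter> V" and b: "b \<in> E n \<inter> V"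
        have aD: "a \<in> D" "m a = n" using a unfolding E_def by simp_all
        have bD: "b \<in> D" "m b = n" using b unfolding E_def by simp_all
        have Ma: "N a \<in> \<N> (m a) \<and> a \<in> N a \<and> N a \<subseteq> W a" using aD(1) by (rule MN)
        have Mb: "N b \<in> \<N> (m b) \<and> b \<in> N b \<and> N b \<subseteq> W b" using bD(1) by (rule MN)
        have "N a \<in> \<N> n" "N b \<in> \<N> n" using Ma Mb aD(2) bD(2) by auto
        moreover have "N a \<inter> V \<noteq> {}" "N b \<inter> V \<noteq> {}" using Ma Mb a b by auto
        ultimately have "N a = N b" using V(3) by blast
        then have "b \<in> W a" using Ma Mb by auto
        moreover have "W a \<inter> D = {a}" using W[OF aD(1)] by blast
        ultimately have "b \<in> W a \<inter> D" using bD(1) by blast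
        then have "b \<in> {a}" using \<open>W a \<inter> D = {a}\<close> by (simp only:)
        then show "a = b" by simp
      qed
      with V(1,2) show "\<exists>V. openin X V \<and> x \<in> V \<and> (\<forall>a\<in>E n \<inter> V. \<forall>b\<in>E n \<inter> V. a = b)" by blast
    qed
  qed
  have U: "(\<Union>n. E n) = D"
  proof
    show "(\<Union>n. E n) \<subseteq> D" unfolding E_def by blast
    show "D \<subseteq> (\<Union>n. E n)"
    proof
      fix d assume "d \<in> D"
      then have "d \<in> E (m d)" unfolding E_def by simp
      then show "d \<in> (\<Union>n. E n)" by (rule UN_I[OF UNIV_I])
    qed
  qed
  have "(\<Union>n. E n) = D \<and> (\<forall>n. closedin X (E n) \<and> discrete_subspace X (E n))"
    by (intro conjI allI U C)
  then show ?thesis by blast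
qed

lemma union_bound:
  fixes \<D> :: "'b set" and A :: "'b \<Rightarrow> nat \<Rightarrow> 'a set"
  assumes inf: "\<not> finite \<D>" and nl: "ordLeq3 (card_of (UNIV :: nat set)) (card_of \<D>)"
    and b: "\<And>D n. D \<in> \<D> \<Longrightarrow> ordLeq3 (card_of (A D n)) (card_of \<D>)"
  shows "ordLeq3 (card_of (\<Union>D\<in>\<D>. \<Union>n. A D n)) (card_of \<D>)"
proof (rule card_of_UNION_ordLeq_infinite[OF inf])
  show "ordLeq3 (card_of \<D>) (card_of \<D>)" by (rule ordLeq_reflexive[OF card_of_Well_order])
  show "\<forall>D\<in>\<D>. ordLeq3 (card_of (\<Union>n. A D n)) (card_of \<D>)"
  proof
    fix D assume D: "D \<in> \<D>"
    show "ordLeq3 (card_of (\<Union>n. A D n)) (card_of \<D>)"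
      by (rule card_of_UNION_ordLeq_infinite[OF inf nl]) (simp add: b[OF D])
  qed
qed

lemma uncountable_omega1:
  fixes \<D> :: "'b set"
  assumes "\<not> countable \<D>"
  shows "ordLeq3 (cardSuc natLeq) (card_of \<D>)"
proof -
  have "\<not> ordLeq3 (card_of \<D>) natLeq"
  proof
    assume "ordLeq3 (card_of \<D>) natLeq"
    moreover have "ordLeq3 natLeq (card_of (UNIV :: nat set))"
      using card_of_nat unfolding ordIso_iff_ordLeq by (rule conjunct2)
    ultimately have "ordLeq3 (card_of \<D>) (card_of (UNIV :: nat set))" by (rule ordLeq_transitive)
    then have "\<exists>f. inj_on f \<D> \<and> f ` \<D> \<subseteq> (UNIV :: nat set)"
      by (simp only: card_of_ordLeq[symmetric])
    then have "countable \<D>" unfolding countable_def by blast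
    with assms show False by simp
  qed
  then have "ordLess2 natLeq (card_of \<D>)"
    by (rule iffD1[OF not_ordLeq_iff_ordLess[OF natLeq_Well_order card_of_Well_order]])
  then show ?thesis
    by (rule iffD1[OF cardSuc_ordLess_ordLeq[OF natLeq_Card_order card_of_Card_order]])
qed

theorem theorem2:
  fixes X :: "'a topology"
  assumes "topspace X \<noteq> {}"
    and "Hausdorff_space X"
    and "regular_space X"
    and "omega1_expandable X"
    and "Baire_space X"
    and "sigma_space X"
  shows "\<forall>\<D> :: 'a set set. (\<Union>\<D> = topspace X \<and> (\<forall>D\<in>\<D>. discrete_subspace X D))
           \<longrightarrow> (\<exists>U. openin X U \<and> U \<noteq> {} \<and> ordLeq3 (card_of U) (card_of \<D>))"
proof (intro allI impI)
  fix \<D> :: "'a set set"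
  assume A: "\<Union>\<D> = topspace X \<and> (\<forall>D\<in>\<D>. discrete_subspace X D)"
  then have cov: "\<Union>\<D> = topspace X" by (rule conjunct1)
  have disc: "discrete_subspace X D" if "D \<in> \<D>" for D using A that by blast
  have T1: "t1_space X" using assms(2) by (rule Hausdorff_imp_t1_space)
  obtain \<N> :: "nat \<Rightarrow> 'a set set" where fam: "\<And>n. discrete_family X (\<N> n)"
    and net: "network X (\<Union>n. \<N> n)"
    using assms(6) unfolding sigma_space_def by blast
  have "\<forall>D\<in>\<D>. \<exists>E :: nat \<Rightarrow> 'a set. (\<Union>n. E n) = D \<and> (\<forall>n. closedin X (E n) \<and> discrete_subspace X (E n))"
  proof
    fix D assume "D \<in> \<D>"
    then have "discrete_subspace X D" by (rule disc)
    then show "\<exists>E :: nat \<Rightarrow> 'a set. (\<Union>n. E n) = D \<and> (\<forall>n. closedin X (E n) \<and> discrete_subspace X (E n))"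
      by (rule split_discrete[OF T1 fam net])
  qed
  then obtain E :: "'a set \<Rightarrow> nat \<Rightarrow> 'a set" where
    E0: "\<forall>D\<in>\<D>. (\<Union>n. E D n) = D \<and> (\<forall>n. closedin X (E D n) \<and> discrete_subspace X (E D n))"
    using bchoice[of \<D> "\<lambda>D E. (\<Union>n. E n) = D \<and> (\<forall>n. closedin X (E n) \<and> discrete_subspace X (E n))"]
    by blast
  have EU: "(\<Union>n. E D n) = D" if "D \<in> \<D>" for D using E0 that by blast
  have EC: "closedin X (E D n)" if "D \<in> \<D>" for D n using E0 that by blast
  have ED: "discrete_subspace X (E D n)" if "D \<in> \<D>" for D n using E0 that by blast
  have top: "\<exists>D n. D \<in> \<D> \<and> x \<in> E D n" if "x \<in> topspace X" for x
  proof -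
    from that cov obtain D where D: "D \<in> \<D>" "x \<in> D" by blast
    then have "x \<in> (\<Union>n. E D n)" using EU[OF D(1)] by simp
    then obtain n where "x \<in> E D n" by blast
    with D(1) show ?thesis by blast
  qed
  have Dne: "\<D> \<noteq> {}"
  proof
    assume e: "\<D> = {}"
    have "topspace X = \<Union>\<D>" using cov by (rule sym)
    also have "\<dots> = {}" using e by simp
    finally show False using assms(1) by (rule notE[rotated])
  qed
  show "\<exists>U. openin X U \<and> U \<noteq> {} \<and> ordLeq3 (card_of U) (card_of \<D>)"
  proof (cases "countable \<D>")
    case True
    define P where "P = \<D> \<times> (UNIV :: nat set)"
    have cP: "countable P" unfolding P_def using True by simp
    have Pne: "P \<noteq> {}" unfolding P_def using Dne by simp
    define C where "C k = E (fst (from_nat_into P k)) (snd (from_nat_into P k))" for k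
    have "topspace X \<subseteq> (\<Union>k. C k)"
    proof
      fix x assume "x \<in> topspace X"
      then have "\<exists>D n. D \<in> \<D> \<and> x \<in> E D n" by (rule top)
      then obtain D n where Dn: "D \<in> \<D>" "x \<in> E D n" by (elim exE conjE)
      then have "(D, n) \<in> P" unfolding P_def by simp
      then have "\<exists>k. from_nat_into P k = (D, n)" by (rule from_nat_into_surj[OF cP])
      then obtain k where "from_nat_into P k = (D, n)" by (elim exE)
      then have "C k = E D n" unfolding C_def by simp
      with Dn(2) have "x \<in> C k" by simp
      then show "x \<in> (\<Union>k. C k)" by (rule UN_I[OF UNIV_I])
    qed
    then have "\<exists>k W. openin X W \<and> W \<noteq> {} \<and> W \<subseteq> X closure_of (C k)"
      by (rule baire_cover[OF assms(5) assms(1)])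
    then obtain k W where W: "openin X W" "W \<noteq> {}" "W \<subseteq> X closure_of (C k)"
      by (elim exE conjE)
    have "from_nat_into P k \<in> P" using Pne by (rule from_nat_into)
    then have fD: "fst (from_nat_into P k) \<in> \<D>" unfolding P_def by auto
    have "closedin X (C k)" unfolding C_def using fD by (rule EC)
    then have clC: "X closure_of (C k) = C k" by (rule closure_of_closedin)
    have dC: "discrete_subspace X (C k)" unfolding C_def using fD by (rule ED)
    from W(2) obtain w where w: "w \<in> W" by blast
    with W(3) clC have wC: "w \<in> C k" by blast
    then obtain Q where Q: "openin X Q" "Q \<inter> C k = {w}"
      using dC unfolding discrete_subspace_def by blast
    have WO: "W \<inter> Q = {w}"
    proof
      show "W \<inter> Q \<subseteq> {w}" using W(3) clC Q(2) by blast
      show "{w} \<subseteq> W \<inter> Q" using w Q(2) by blast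
    qed
    have "openin X (W \<inter> Q)" using W(1) Q(1) by (rule openin_Int)
    moreover have "W \<inter> Q \<noteq> {}" using WO by simp
    moreover have "ordLeq3 (card_of (W \<inter> Q)) (card_of \<D>)"
      unfolding WO using Dne by (rule card_of_singl_ordLeq)
    ultimately show ?thesis by blast
  next
    case False
    have inf: "\<not> finite \<D>" using False countable_finite by blast
    have nl: "ordLeq3 (card_of (UNIV :: nat set)) (card_of \<D>)"
      using inf by (simp only: infinite_iff_card_of_nat)
    have w1: "ordLeq3 (cardSuc natLeq) (card_of \<D>)" using False by (rule uncountable_omega1)
    have ex: "\<forall>D. closedin X D \<and> discrete_subspace X D \<longrightarrow>
        (\<exists>U :: 'a \<Rightarrow> 'a set. (\<forall>d\<in>D. openin X (U d) \<and> U d \<inter> D = {d}) \<and>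
           (\<forall>x\<in>topspace X. ordLeq3 (card_of {G. G \<in> U ` D \<and> x \<in> G}) (cardSuc natLeq)))"
      using assms(4) unfolding omega1_expandable_def .
    have "\<forall>p\<in>\<D> \<times> (UNIV :: nat set). \<exists>U :: 'a \<Rightarrow> 'a set.
        (\<forall>d\<in>E (fst p) (snd p). openin X (U d) \<and> U d \<inter> E (fst p) (snd p) = {d}) \<and>
        (\<forall>x\<in>topspace X. ordLeq3 (card_of {G. G \<in> U ` E (fst p) (snd p) \<and> x \<in> G}) (cardSuc natLeq))"
    proof
      fix p assume p: "p \<in> \<D> \<times> (UNIV :: nat set)"
      then have pD: "fst p \<in> \<D>" by auto
      have "closedin X (E (fst p) (snd p)) \<and> discrete_subspace X (E (fst p) (snd p))"
        using EC[OF pD] ED[OF pD] by (rule conjI)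
      then show "\<exists>U :: 'a \<Rightarrow> 'a set.
        (\<forall>d\<in>E (fst p) (snd p). openin X (U d) \<and> U d \<inter> E (fst p) (snd p) = {d}) \<and>
        (\<forall>x\<in>topspace X. ordLeq3 (card_of {G. G \<in> U ` E (fst p) (snd p) \<and> x \<in> G}) (cardSuc natLeq))"
        by (rule mp[OF spec[OF ex]])
    qed
    then have "\<exists>UU :: 'a set \<times> nat \<Rightarrow> 'a \<Rightarrow> 'a set. \<forall>p\<in>\<D> \<times> (UNIV :: nat set).
        (\<forall>d\<in>E (fst p) (snd p). openin X (UU p d) \<and> UU p d \<inter> E (fst p) (snd p) = {d}) \<and>
        (\<forall>x\<in>topspace X. ordLeq3 (card_of {G. G \<in> UU p ` E (fst p) (snd p) \<and> x \<in> G}) (cardSuc natLeq))"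
      by (rule bchoice)
    then obtain UU :: "'a set \<times> nat \<Rightarrow> 'a \<Rightarrow> 'a set" where UU: "\<forall>p\<in>\<D> \<times> (UNIV :: nat set).
        (\<forall>d\<in>E (fst p) (snd p). openin X (UU p d) \<and> UU p d \<inter> E (fst p) (snd p) = {d}) \<and>
        (\<forall>x\<in>topspace X. ordLeq3 (card_of {G. G \<in> UU p ` E (fst p) (snd p) \<and> x \<in> G}) (cardSuc natLeq))"
      by (elim exE)
    define U where "U D n = UU (D, n)" for D n
    have Uo: "openin X (U D n d)" and UE: "U D n d \<inter> E D n = {d}" if "D \<in> \<D>" "d \<in> E D n" for D n d
    proof -
      have "(D, n) \<in> \<D> \<times> (UNIV :: nat set)" using that(1) by simp
      then have "\<forall>d\<in>E D n. openin X (U D n d) \<and> U D n d \<inter> E D n = {d}"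
        using UU unfolding U_def by auto
      then show "openin X (U D n d)" "U D n d \<inter> E D n = {d}" using that(2) by auto
    qed
    have Uord: "ordLeq3 (card_of {G. G \<in> U D n ` E D n \<and> x \<in> G}) (cardSuc natLeq)"
      if "D \<in> \<D>" "x \<in> topspace X" for D n x
    proof -
      have "(D, n) \<in> \<D> \<times> (UNIV :: nat set)" using that(1) by simp
      then have "\<forall>x\<in>topspace X. ordLeq3 (card_of {G. G \<in> U D n ` E D n \<and> x \<in> G}) (cardSuc natLeq)"
        using UU unfolding U_def by auto
      then show ?thesis using that(2) by auto
    qed
    have pt: "ordLeq3 (card_of {d \<in> E D n. x \<in> U D n d}) (card_of \<D>)"
      if "D \<in> \<D>" "x \<in> topspace X" for D n x
    proof -
      have "inj_on (U D n) {d \<in> E D n. x \<in> U D n d}"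
      proof (rule inj_onI)
        fix a b assume a: "a \<in> {d \<in> E D n. x \<in> U D n d}" and b: "b \<in> {d \<in> E D n. x \<in> U D n d}"
          and ab: "U D n a = U D n b"
        have "a \<in> U D n a \<inter> E D n" using UE[OF that(1)] a by auto
        then have "a \<in> U D n b \<inter> E D n" using ab by simp
        then show "a = b" using UE[OF that(1)] b by auto
      qed
      moreover have "U D n ` {d \<in> E D n. x \<in> U D n d} \<subseteq> {G. G \<in> U D n ` E D n \<and> x \<in> G}"
        by auto
      ultimately have h1: "ordLeq3 (card_of {d \<in> E D n. x \<in> U D n d}) (card_of {G. G \<in> U D n ` E D n \<and> x \<in> G})"
        by (subst card_of_ordLeq[symmetric]) blast
      have h2: "ordLeq3 (card_of {G. G \<in> U D n ` E D n \<and> x \<in> G}) (cardSuc natLeq)" using that by (rule Uord)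
      show ?thesis using ordLeq_transitive[OF ordLeq_transitive[OF h1 h2] w1] .
    qed
    have "\<forall>y\<in>topspace X. \<exists>q. fst q \<in> \<D> \<and> y \<in> E (fst q) (snd q)"
    proof
      fix y assume "y \<in> topspace X"
      then have "\<exists>D n. D \<in> \<D> \<and> y \<in> E D n" by (rule top)
      then obtain D n where "D \<in> \<D>" "y \<in> E D n" by (elim exE conjE)
      then have "fst (D, n) \<in> \<D> \<and> y \<in> E (fst (D, n)) (snd (D, n))" by simp
      then show "\<exists>q. fst q \<in> \<D> \<and> y \<in> E (fst q) (snd q)" by (rule exI)
    qed
    then have "\<exists>\<rho>. \<forall>y\<in>topspace X. fst (\<rho> y) \<in> \<D> \<and> y \<in> E (fst (\<rho> y)) (snd (\<rho> y))"
      by (rule bchoice)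
    then obtain \<rho> :: "'a \<Rightarrow> 'a set \<times> nat" where
      \<rho>: "\<forall>y\<in>topspace X. fst (\<rho> y) \<in> \<D> \<and> y \<in> E (fst (\<rho> y)) (snd (\<rho> y))"
      by (elim exE)
    define Uy where "Uy y = U (fst (\<rho> y)) (snd (\<rho> y)) y" for y
    have \<rho>D: "fst (\<rho> y) \<in> \<D>" and \<rho>E: "y \<in> E (fst (\<rho> y)) (snd (\<rho> y))"
      if "y \<in> topspace X" for y using \<rho> that by auto
    have Uyo: "openin X (Uy y)" and Uyin: "y \<in> Uy y" if "y \<in> topspace X" for y
    proof -
      show "openin X (Uy y)" unfolding Uy_def using \<rho>D[OF that] \<rho>E[OF that] by (rule Uo)
      have "Uy y \<inter> E (fst (\<rho> y)) (snd (\<rho> y)) = {y}"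
        unfolding Uy_def using \<rho>D[OF that] \<rho>E[OF that] by (rule UE)
      then show "y \<in> Uy y" by blast
    qed
    have "\<forall>y\<in>topspace X. \<exists>q. snd q \<in> \<N> (fst q) \<and> y \<in> snd q \<and> snd q \<subseteq> Uy y"
    proof
      fix y assume y: "y \<in> topspace X"
      have "openin X (Uy y) \<and> y \<in> Uy y" using Uyo[OF y] Uyin[OF y] by (rule conjI)
      then have "\<exists>N\<in>(\<Union>n. \<N> n). y \<in> N \<and> N \<subseteq> Uy y"
        using net unfolding network_def by blast
      then obtain N k where "N \<in> \<N> k" "y \<in> N" "N \<subseteq> Uy y" by blast
      then have "snd (k, N) \<in> \<N> (fst (k, N)) \<and> y \<in> snd (k, N) \<and> snd (k, N) \<subseteq> Uy y" by simp
      then show "\<exists>q. snd q \<in> \<N> (fst q) \<and> y \<in> snd q \<and> snd q \<subseteq> Uy y" by (rule exI)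
    qed
    then have "\<exists>\<mu>. \<forall>y\<in>topspace X. snd (\<mu> y) \<in> \<N> (fst (\<mu> y)) \<and> y \<in> snd (\<mu> y) \<and> snd (\<mu> y) \<subseteq> Uy y"
      by (rule bchoice)
    then obtain \<mu> :: "'a \<Rightarrow> nat \<times> 'a set" where
      \<mu>: "\<forall>y\<in>topspace X. snd (\<mu> y) \<in> \<N> (fst (\<mu> y)) \<and> y \<in> snd (\<mu> y) \<and> snd (\<mu> y) \<subseteq> Uy y"
      by (elim exE)
    define m where "m y = fst (\<mu> y)" for y
    define Ny where "Ny y = snd (\<mu> y)" for y
    have Ny1: "Ny y \<in> \<N> (m y)" and Ny2: "y \<in> Ny y" and Ny3: "Ny y \<subseteq> Uy y"
      if "y \<in> topspace X" for y using \<mu> that unfolding m_def Ny_def by auto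
    define T where "T k = {y \<in> topspace X. m y = k}" for k
    have "topspace X \<subseteq> (\<Union>k. T k)"
    proof
      fix y assume "y \<in> topspace X"
      then have "y \<in> T (m y)" unfolding T_def by simp
      then show "y \<in> (\<Union>k. T k)" by (rule UN_I[OF UNIV_I])
    qed
    then have "\<exists>k W. openin X W \<and> W \<noteq> {} \<and> W \<subseteq> X closure_of (T k)"
      by (rule baire_cover[OF assms(5) assms(1)])
    then obtain k W where W: "openin X W" "W \<noteq> {}" "W \<subseteq> X closure_of (T k)"
      by (elim exE conjE)
    from W(2) obtain z where z: "z \<in> W" by blast
    have zX: "z \<in> topspace X" using z openin_subset[OF W(1)] by blast
    have "discrete_family X (\<N> k)" by (rule fam)
    then have "\<exists>V. openin X V \<and> z \<in> V \<and>
        (\<forall>A\<in>\<N> k. \<forall>B\<in>\<N> k. A \<inter> V \<noteq> {} \<and> B \<inter> V \<noteq> {} \<longrightarrow> A = B)"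
      using zX unfolding discrete_family_def by (rule bspec)
    then obtain V0 where V0: "openin X V0" "z \<in> V0"
        "\<forall>A\<in>\<N> k. \<forall>B\<in>\<N> k. A \<inter> V0 \<noteq> {} \<and> B \<inter> V0 \<noteq> {} \<longrightarrow> A = B"
      by (elim exE conjE)
    define V where "V = W \<inter> V0"
    have Vo: "openin X V" unfolding V_def using W(1) V0(1) by (rule openin_Int)
    have zV: "z \<in> V" unfolding V_def using z V0(2) by (rule IntI)
    have VX: "V \<subseteq> topspace X" using Vo by (rule openin_subset)
    define S where "S = T k \<inter> V"
    have dense: "\<exists>s. s \<in> S \<and> s \<in> Q" if "openin X Q" "p \<in> Q" "p \<in> V" for Q p
    proof -
      have "p \<in> X closure_of (T k)" using that(3) W(3) unfolding V_def by blast
      then have cl: "\<forall>R. p \<in> R \<and> openin X R \<longrightarrow> (\<exists>y. y \<in> T k \<and> y \<in> R)"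
        unfolding in_closure_of by (rule conjunct2)
      have "openin X (Q \<inter> V)" using that(1) Vo by (rule openin_Int)
      moreover have "p \<in> Q \<inter> V" using that(2,3) by (rule IntI)
      ultimately have "\<exists>y. y \<in> T k \<and> y \<in> Q \<inter> V" using cl by blast
      then obtain y where "y \<in> T k" "y \<in> Q \<inter> V" by (elim exE conjE)
      then have "y \<in> S \<and> y \<in> Q" unfolding S_def by blast
      then show ?thesis by (rule exI)
    qed
    have "\<exists>s. s \<in> S \<and> s \<in> V" using Vo zV zV by (rule dense)
    then obtain y0 where y0: "y0 \<in> S" by blast
    have SX: "s \<in> topspace X" "m s = k" "s \<in> V" if "s \<in> S" for s
      using that unfolding S_def T_def by auto
    have key: "y0 \<in> Uy s" if s: "s \<in> S" for s
    proof -
      have "Ny s \<in> \<N> k" using Ny1[OF SX(1)[OF s]] SX(2)[OF s] by simp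
      moreover have "Ny y0 \<in> \<N> k" using Ny1[OF SX(1)[OF y0]] SX(2)[OF y0] by simp
      moreover have "Ny s \<inter> V0 \<noteq> {}" using Ny2[OF SX(1)[OF s]] SX(3)[OF s] unfolding V_def by blast
      moreover have "Ny y0 \<inter> V0 \<noteq> {}" using Ny2[OF SX(1)[OF y0]] SX(3)[OF y0] unfolding V_def by blast
      ultimately have "Ny s = Ny y0" using V0(3) by blast
      then have "y0 \<in> Ny s" using Ny2[OF SX(1)[OF y0]] by simp
      then show ?thesis using Ny3[OF SX(1)[OF s]] by blast
    qed
    have y0X: "y0 \<in> topspace X" using SX(1)[OF y0] .
    have "S \<subseteq> (\<Union>D\<in>\<D>. \<Union>n. {d \<in> E D n. y0 \<in> U D n d})"
    proof
      fix s assume s: "s \<in> S"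
      have sX: "s \<in> topspace X" using SX(1)[OF s] .
      have "s \<in> {d \<in> E (fst (\<rho> s)) (snd (\<rho> s)). y0 \<in> U (fst (\<rho> s)) (snd (\<rho> s)) d}"
        using \<rho>E[OF sX] key[OF s] unfolding Uy_def by simp
      then show "s \<in> (\<Union>D\<in>\<D>. \<Union>n. {d \<in> E D n. y0 \<in> U D n d})"
        using \<rho>D[OF sX] by blast
    qed
    moreover have "ordLeq3 (card_of (\<Union>D\<in>\<D>. \<Union>n. {d \<in> E D n. y0 \<in> U D n d})) (card_of \<D>)"
      by (rule union_bound[OF inf nl]) (rule pt[OF _ y0X])
    ultimately have Scard: "ordLeq3 (card_of S) (card_of \<D>)"
      using card_of_mono1 ordLeq_transitive by blast
    have "V \<subseteq> (\<Union>D\<in>\<D>. \<Union>n. \<Union>s\<in>S. {d \<in> E D n. s \<in> U D n d})"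
    proof
      fix v assume v: "v \<in> V"
      have vX: "v \<in> topspace X" using v VX by blast
      then have "\<exists>D n. D \<in> \<D> \<and> v \<in> E D n" by (rule top)
      then obtain D n where Dn: "D \<in> \<D>" "v \<in> E D n" by (elim exE conjE)
      have "openin X (U D n v)" using Dn by (rule Uo)
      moreover have "v \<in> U D n v" using UE[OF Dn] by blast
      ultimately have "\<exists>s. s \<in> S \<and> s \<in> U D n v" using v by (intro dense)
      then obtain s where "s \<in> S" "s \<in> U D n v" by (elim exE conjE)
      then have "v \<in> (\<Union>s\<in>S. {d \<in> E D n. s \<in> U D n d})" using Dn(2) by blast
      then show "v \<in> (\<Union>D\<in>\<D>. \<Union>n. \<Union>s\<in>S. {d \<in> E D n. s \<in> U D n d})" using Dn(1) by blast
    qed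
    moreover have "ordLeq3 (card_of (\<Union>D\<in>\<D>. \<Union>n. \<Union>s\<in>S. {d \<in> E D n. s \<in> U D n d})) (card_of \<D>)"
    proof (rule union_bound[OF inf nl])
      fix D n assume D: "D \<in> \<D>"
      show "ordLeq3 (card_of (\<Union>s\<in>S. {d \<in> E D n. s \<in> U D n d})) (card_of \<D>)"
      proof (rule card_of_UNION_ordLeq_infinite[OF inf Scard])
        show "\<forall>s\<in>S. ordLeq3 (card_of {d \<in> E D n. s \<in> U D n d}) (card_of \<D>)"
        proof
          fix s assume "s \<in> S"
          then have "s \<in> topspace X" by (rule SX(1))
          with D show "ordLeq3 (card_of {d \<in> E D n. s \<in> U D n d}) (card_of \<D>)" by (rule pt)
        qed
      qed
    qed
    ultimately have Vcard: "ordLeq3 (card_of V) (card_of \<D>)"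
      using card_of_mono1 ordLeq_transitive by blast
    have "V \<noteq> {}" using zV by blast
    with Vo Vcard show ?thesis by blast
  qed
qed

end
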